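(* Let $\mathcal{H}$ be a Hilbert space, $H$ self-adjoint on $\mathcal{H}$, and $u:\mathbb{R}^+\to\mathcal{H}$ with $\sup_{t\ge0}\|u(t)\|<\infty$ and $u\in C^1(\mathbb{R}^+,\mathcal{H})\cap C^0(\mathbb{R}^+,{\rm Dom}\,H)$; set $r(t)=\partial_tu(t)+iHu(t)$. Let $t\mapsto M(t)\in B(\mathcal{H})$ have a bounded Heisenberg derivative $\mathcal{D}M(t)$ and suppose: (i) $\sup_t\|M(t)\|<\infty$ and $\|M(\cdot)r(\cdot)\|,\|M^*(\cdot)r(\cdot)\|\in L^1(\mathbb{R}^+,dt)$; (ii) $\mathcal{D}M(t)\ge B^*(t)B(t)-\sum_{j=1}^nC_j^*(t)C_j(t)$ with $B(t),C_j(t)\in B(\mathcal{H})$ and $\int_{\mathbb{R}^+}\|C_j(t)u(t)\|^2dt<\infty$ for each $j$. Then $\int_0^{+\infty}\|B(t)u(t)\|^2dt<\infty$.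
   Context: The Heisenberg derivative is $\mathcal{D}M(t)=\partial_tM(t)+[H,iM(t)]$, where $[H,iM(t)]$, defined as a quadratic form on ${\rm Dom}\,H$, is assumed to extend to a bounded operator. The inequality in (ii) is in the sense of quadratic forms. *)

theory Defs
  imports "HOL-Analysis.Analysis"
begin

text \<open>Convention: the inner product is antilinear in the first and linear in the
  second argument (physics convention).\<close>

class complex_inner = real_normed_vector +
  fixes scaleC :: "complex \<Rightarrow> 'a \<Rightarrow> 'a" (infixr \<open>*\<^sub>C\<close> 75)
    and cinner :: "'a \<Rightarrow> 'a \<Rightarrow> complex"
  assumes scaleC_add_right: "a *\<^sub>C (x + y) = a *\<^sub>C x + a *\<^sub>C y"
    and scaleC_add_left: "(a + b) *\<^sub>C x = a *\<^sub>C x + b *\<^sub>C x"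
    and scaleC_scaleC: "a *\<^sub>C (b *\<^sub>C x) = (a * b) *\<^sub>C x"
    and scaleC_one: "1 *\<^sub>C x = x"
    and scaleR_scaleC: "r *\<^sub>R x = complex_of_real r *\<^sub>C x"
    and cinner_cnj_commute: "cinner x y = cnj (cinner y x)"
    and cinner_add_right: "cinner x (y + z) = cinner x y + cinner x z"
    and cinner_scaleC_right: "cinner x (a *\<^sub>C y) = a * cinner x y"
    and cinner_eq_zero_iff: "cinner x x = 0 \<longleftrightarrow> x = 0"
    and norm_eq_sqrt_cinner: "norm x = sqrt (Re (cinner x x))"

class chilbert_space = complex_inner + complete_space

definition clinear_on :: "'a::complex_inner set \<Rightarrow> ('a \<Rightarrow> 'b::complex_inner) \<Rightarrow> bool" where
  "clinear_on S f \<longleftrightarrow>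
     (\<forall>x\<in>S. \<forall>y\<in>S. f (x + y) = f x + f y) \<and> (\<forall>c. \<forall>x\<in>S. f (c *\<^sub>C x) = c *\<^sub>C f x)"

definition bounded_clinear :: "('a::complex_inner \<Rightarrow> 'b::complex_inner) \<Rightarrow> bool" where
  "bounded_clinear f \<longleftrightarrow> clinear_on UNIV f \<and> (\<exists>K. \<forall>x. norm (f x) \<le> K * norm x)"

definition csubspace :: "'a::complex_inner set \<Rightarrow> bool" where
  "csubspace S \<longleftrightarrow> 0 \<in> S \<and> (\<forall>x\<in>S. \<forall>y\<in>S. x + y \<in> S) \<and> (\<forall>c. \<forall>x\<in>S. c *\<^sub>C x \<in> S)"

text \<open>A (possibly unbounded) self-adjoint operator with domain D and action A:
  D is a dense subspace, A is linear on D, and the adjoint of A equals A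
  (same domain, same action): y is in the domain of the adjoint with
  A^* y = z iff  <A x, y> = <x, z> for all x in D.\<close>
definition self_adjoint_op :: "'a::complex_inner set \<Rightarrow> ('a \<Rightarrow> 'a) \<Rightarrow> bool" where
  "self_adjoint_op D A \<longleftrightarrow>
     csubspace D \<and> closure D = UNIV \<and> clinear_on D A \<and>
     (\<forall>y z. (\<forall>x\<in>D. cinner (A x) y = cinner x z) \<longleftrightarrow> (y \<in> D \<and> z = A y))"


text \<open>Sanity check that the class is satisfiable: the complex numbers form a
  complex Hilbert space.\<close>
instantiation complex :: chilbert_space
begin
definition scaleC_complex :: "complex \<Rightarrow> complex \<Rightarrow> complex" where
  "scaleC_complex a x = a * x"
definition cinner_complex :: "complex \<Rightarrow> complex \<Rightarrow> complex" where
  "cinner_complex x y = cnj x * y"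
instance
proof
  fix x :: complex
  show "norm x = sqrt (Re (cinner x x))"
    by (simp add: cinner_complex_def complex_mult_cnj cmod_def power2_eq_square)
qed (auto simp: scaleC_complex_def cinner_complex_def algebra_simps scaleR_conv_of_real)
end

end

theory Submission
  imports Defs
begin

lemma cinner_add_left: "cinner (x + y) (z::'a::complex_inner) = cinner x z + cinner y z"
  by (metis cinner_cnj_commute cinner_add_right complex_cnj_add)

lemma cinner_scaleC_left: "cinner (a *\<^sub>C x) (y::'a::complex_inner) = cnj a * cinner x y"
  by (metis cinner_cnj_commute cinner_scaleC_right complex_cnj_mult)

lemma cinner_zero_right[simp]: "cinner x (0::'a::complex_inner) = 0"
  using cinner_add_right[of x 0 0] by simp

lemma cinner_zero_left[simp]: "cinner (0::'a::complex_inner) x = 0"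
  using cinner_add_left[of 0 0 x] by simp

lemma cinner_minus_right: "cinner x (- y::'a::complex_inner) = - cinner x y"
  using cinner_add_right[of x y "-y"] by (simp add: add_eq_0_iff)

lemma cinner_minus_left: "cinner (- x::'a::complex_inner) y = - cinner x y"
  using cinner_add_left[of x "-x" y] by (simp add: add_eq_0_iff)

lemma cinner_diff_right: "cinner x (y - z::'a::complex_inner) = cinner x y - cinner x z"
  using cinner_add_right[of x y "-z"] by (simp add: cinner_minus_right)

lemma cinner_diff_left: "cinner (y - z::'a::complex_inner) x = cinner y x - cinner z x"
  using cinner_add_left[of y "-z" x] by (simp add: cinner_minus_left)

lemma cinner_scaleR_right: "cinner x (c *\<^sub>R y::'a::complex_inner) = complex_of_real c * cinner x y"
  by (simp add: scaleR_scaleC cinner_scaleC_right)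

lemma cinner_scaleR_left: "cinner (c *\<^sub>R x::'a::complex_inner) y = complex_of_real c * cinner x y"
  by (simp add: scaleR_scaleC cinner_scaleC_left)

lemma Re_cinner_self: "Re (cinner x (x::'a::complex_inner)) = (norm x)\<^sup>2"
proof -
  have "0 \<le> Re (cinner x x)" by (metis norm_ge_zero norm_eq_sqrt_cinner real_sqrt_ge_0_iff)
  thus ?thesis using norm_eq_sqrt_cinner[of x] by simp
qed

lemma Re_cinner_sym: "Re (cinner x (y::'a::complex_inner)) = Re (cinner y x)"
  by (subst cinner_cnj_commute) simp

lemma Re_cinner_CS: "\<bar>Re (cinner x (y::'a::complex_inner))\<bar> \<le> norm x * norm y"
proof (cases "y = 0")
  case True thus ?thesis by simp
next
  case False
  define R where "R = Re (cinner x y)"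
  define t where "t = R / (norm y)\<^sup>2"
  have ny: "norm y > 0" using False by simp
  have "0 \<le> (norm (x - t *\<^sub>R y))\<^sup>2" by simp
  also have "\<dots> = (norm x)\<^sup>2 - 2 * t * R + t\<^sup>2 * (norm y)\<^sup>2"
    unfolding Re_cinner_self[symmetric]
    by (simp add: cinner_diff_left cinner_diff_right cinner_scaleR_left cinner_scaleR_right
        R_def Re_cinner_sym[of y x] power2_eq_square algebra_simps)
  also have "\<dots> = (norm x)\<^sup>2 - R\<^sup>2 / (norm y)\<^sup>2"
    using ny by (simp add: t_def field_simps power2_eq_square)
  finally have "R\<^sup>2 \<le> (norm x * norm y)\<^sup>2"
    using ny by (simp add: field_simps power_mult_distrib)
  thus ?thesis unfolding R_def
    using abs_le_square_iff[of R "norm x * norm y"] by (simp add: R_def)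
qed

lemma bounded_bilinear_Re_cinner:
  "bounded_bilinear (\<lambda>x y::'a::complex_inner. Re (cinner x y))"
proof
  fix a a' b b' :: 'a and r :: real
  show "Re (cinner (a + a') b) = Re (cinner a b) + Re (cinner a' b)"
    by (simp add: cinner_add_left)
  show "Re (cinner a (b + b')) = Re (cinner a b) + Re (cinner a b')"
    by (simp add: cinner_add_right)
  show "Re (cinner (r *\<^sub>R a) b) = r *\<^sub>R Re (cinner a b)"
    by (simp add: cinner_scaleR_left)
  show "Re (cinner a (r *\<^sub>R b)) = r *\<^sub>R Re (cinner a b)"
    by (simp add: cinner_scaleR_right)
next
  show "\<exists>K. \<forall>a b::'a. norm (Re (cinner a b)) \<le> norm a * norm b * K"
    by (rule exI[of _ 1]) (simp add: Re_cinner_CS)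
qed

lemma bclin_add: "bounded_clinear f \<Longrightarrow> f (x + y) = f x + f y"
  by (simp add: bounded_clinear_def clinear_on_def)
lemma bclin_scaleC: "bounded_clinear f \<Longrightarrow> f (c *\<^sub>C x) = c *\<^sub>C f x"
  by (simp add: bounded_clinear_def clinear_on_def)
lemma bclin_zero: "bounded_clinear f \<Longrightarrow> f 0 = 0"
  using bclin_add[of f 0 0] by simp
lemma bclin_minus: "bounded_clinear f \<Longrightarrow> f (- x) = - f x"
  using bclin_add[of f x "-x"] bclin_zero[of f] by (simp add: add_eq_0_iff)
lemma bclin_diff: "bounded_clinear f \<Longrightarrow> f (x - y) = f x - f y"
  using bclin_add[of f x "-y"] bclin_minus[of f y] by simp
lemma bclin_scaleR: "bounded_clinear f \<Longrightarrow> f (c *\<^sub>R x) = c *\<^sub>R f x"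
  by (simp add: scaleR_scaleC bclin_scaleC)

lemma vec_alg: fixes A B C D E F :: "'a::real_vector"
  shows "a *\<^sub>R (A - (B + c *\<^sub>R (D + E))) = a *\<^sub>R (C - (B + c *\<^sub>R D)) + a *\<^sub>R (A - (C + c *\<^sub>R F)) + (a * c) *\<^sub>R (F - E)"
  by (simp add: algebra_simps)


lemma deriv_apply:
  fixes M :: "real \<Rightarrow> 'a::complex_inner \<Rightarrow> 'a" and u :: "real \<Rightarrow> 'a"
  assumes t: "t \<in> S"
    and lin: "\<And>s. s \<in> S \<Longrightarrow> bounded_clinear (M s)"
    and unif: "\<And>s x. s \<in> S \<Longrightarrow> norm (M s x) \<le> K * norm x"
    and Md: "\<And>x. ((\<lambda>s. M s x) has_vector_derivative Md x) (at t within S)"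
    and ud: "(u has_vector_derivative u') (at t within S)"
  shows "((\<lambda>s. M s (u s)) has_vector_derivative (Md (u t) + M t u')) (at t within S)"
proof -
  define e1 where "e1 s = (1 / norm (s - t)) *\<^sub>R (M s (u t) - (M t (u t) + (s - t) *\<^sub>R Md (u t)))" for s
  define e2 where "e2 s = (1 / norm (s - t)) *\<^sub>R (u s - (u t + (s - t) *\<^sub>R u'))" for s
  define e3 where "e3 s = M s u' - M t u'" for s
  have l1: "(e1 \<longlongrightarrow> 0) (at t within S)"
    using Md[of "u t"] unfolding has_vector_derivative_def has_derivative_within e1_def by simp
  have l2: "(e2 \<longlongrightarrow> 0) (at t within S)"
    using ud unfolding has_vector_derivative_def has_derivative_within e2_def by simp
  have "continuous (at t within S) (\<lambda>s. M s u')"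
    using Md[of u'] has_derivative_continuous unfolding has_vector_derivative_def by blast
  hence lc: "((\<lambda>s. M s u') \<longlongrightarrow> M t u') (at t within S)"
    by (simp add: continuous_within)
  have l3: "(e3 \<longlongrightarrow> 0) (at t within S)"
    unfolding e3_def using tendsto_diff[OF lc tendsto_const[of "M t u'"]] by simp
  have lg: "((\<lambda>s. norm (e1 s) + K * norm (e2 s) + norm (e3 s)) \<longlongrightarrow> 0) (at t within S)"
    using tendsto_add[OF tendsto_add[OF tendsto_norm_zero[OF l1] tendsto_mult_right_zero[OF tendsto_norm_zero[OF l2]]] tendsto_norm_zero[OF l3]]
    by simp
  have ev: "eventually (\<lambda>s. s \<in> S) (at t within S)"
    by (simp add: eventually_at_filter)
  have bound: "norm ((1 / norm (s - t)) *\<^sub>R (M s (u s) - (M t (u t) + (s - t) *\<^sub>R (Md (u t) + M t u'))))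
      \<le> norm (e1 s) + K * norm (e2 s) + norm (e3 s)" if s: "s \<in> S" for s
  proof -
    have L: "bounded_clinear (M s)" using lin s by simp
    have eq: "(1 / norm (s - t)) *\<^sub>R (M s (u s) - (M t (u t) + (s - t) *\<^sub>R (Md (u t) + M t u')))
       = e1 s + M s (e2 s) + ((s - t) / norm (s - t)) *\<^sub>R e3 s"
    proof -
      have m: "M s (e2 s) = (1 / norm (s - t)) *\<^sub>R (M s (u s) - (M s (u t) + (s - t) *\<^sub>R M s u'))"
        by (simp add: e2_def bclin_scaleR[OF L] bclin_diff[OF L] bclin_add[OF L])
      have d: "(s - t) / norm (s - t) = (1 / norm (s - t)) * (s - t)" by simp
      show ?thesis unfolding m d e1_def e3_def by (rule vec_alg)
    qed
    have c: "norm (((s - t) / norm (s - t)) *\<^sub>R e3 s) \<le> norm (e3 s)"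
    proof -
      have "\<bar>(s - t) / norm (s - t)\<bar> \<le> 1" by (cases "s = t") auto
      thus ?thesis by (simp add: mult_left_le_one_le)
    qed
    have "norm (e1 s + M s (e2 s) + ((s - t) / norm (s - t)) *\<^sub>R e3 s)
        \<le> norm (e1 s) + norm (M s (e2 s)) + norm (((s - t) / norm (s - t)) *\<^sub>R e3 s)"
      by (meson norm_triangle_ineq add_mono order_trans order_refl)
    also have "\<dots> \<le> norm (e1 s) + K * norm (e2 s) + norm (e3 s)"
      using unif[OF s, of "e2 s"] c by linarith
    finally show ?thesis using eq by simp
  qed
  show ?thesis
    unfolding has_vector_derivative_def has_derivative_within
    apply (rule conjI)
     apply (rule bounded_linear_scaleR_left)
    apply (rule Lim_null_comparison[OF _ lg])
    using ev by (rule eventually_mono) (rule bound)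
qed

theorem lemmaA1:
  fixes D :: "'a::chilbert_space set" and Hop :: "'a \<Rightarrow> 'a"
    and u u' :: "real \<Rightarrow> 'a"
    and M Mstar dM DM B :: "real \<Rightarrow> 'a \<Rightarrow> 'a"
    and C :: "nat \<Rightarrow> real \<Rightarrow> 'a \<Rightarrow> 'a" and n :: nat
    and r :: "real \<Rightarrow> 'a"
  defines "r \<equiv> \<lambda>t. u' t + \<i> *\<^sub>C Hop (u t)"
  assumes H_sa: "self_adjoint_op D Hop"
    and u_bdd: "bounded (u ` {0..})"
    and u_deriv: "\<forall>t\<ge>0. (u has_vector_derivative u' t) (at t within {0..})"
    and u'_cont: "continuous_on {0..} u'"
    and u_dom: "\<forall>t\<ge>0. u t \<in> D"
    and Hu_cont: "continuous_on {0..} (\<lambda>t. Hop (u t))"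
    and M_bounded: "\<forall>t\<ge>0. bounded_clinear (M t)"
    and M_adj: "\<forall>t\<ge>0. \<forall>x y. cinner (M t x) y = cinner x (Mstar t y)"
    and M_deriv: "\<forall>t\<ge>0. bounded_clinear (dM t) \<and>
                    (\<forall>x. ((\<lambda>s. M s x) has_vector_derivative dM t x) (at t within {0..}))"
    and DM_bounded: "\<forall>t\<ge>0. bounded_clinear (DM t)"
    and DM_heis: "\<forall>t\<ge>0. \<forall>\<phi>\<in>D. \<forall>\<psi>\<in>D.
        cinner \<phi> (DM t \<psi>) = cinner \<phi> (dM t \<psi>)
          + (cinner (Hop \<phi>) (\<i> *\<^sub>C M t \<psi>) - cinner \<phi> (\<i> *\<^sub>C M t (Hop \<psi>)))"
    and M_unif: "\<exists>K. \<forall>t\<ge>0. \<forall>x. norm (M t x) \<le> K * norm x"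
    and Mr_L1: "set_integrable lborel {0..} (\<lambda>t. norm (M t (r t)))"
    and Mstar_r_L1: "set_integrable lborel {0..} (\<lambda>t. norm (Mstar t (r t)))"
    and B_bounded: "\<forall>t\<ge>0. bounded_clinear (B t)"
    and C_bounded: "\<forall>j<n. \<forall>t\<ge>0. bounded_clinear (C j t)"
    and DM_lower: "\<forall>t\<ge>0. \<forall>\<phi>. Im (cinner \<phi> (DM t \<phi>)) = 0 \<and>
        Re (cinner \<phi> (DM t \<phi>)) \<ge> (norm (B t \<phi>))\<^sup>2 - (\<Sum>j<n. (norm (C j t \<phi>))\<^sup>2)"
    and C_L2: "\<forall>j<n. set_integrable lborel {0..} (\<lambda>t. (norm (C j t (u t)))\<^sup>2)"
  shows "(\<integral>\<^sup>+ t\<in>{0..}. ennreal ((norm (B t (u t)))\<^sup>2) \<partial>lborel) < \<infinity>"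
proof -
  define R where "R = (\<lambda>x y::'a. Re (cinner x y))"
  have bb: "bounded_bilinear R" unfolding R_def by (rule bounded_bilinear_Re_cinner)
  obtain U where U: "U > 0" "\<And>t. t \<ge> 0 \<Longrightarrow> norm (u t) \<le> U"
    using u_bdd unfolding bounded_pos by auto
  obtain K where K: "\<And>t x. t \<ge> 0 \<Longrightarrow> norm (M t x) \<le> K * norm x"
    using M_unif by auto
  define g where "g t = R (u t) (M t (u t))" for t
  define g' where "g' t = R (u t) (dM t (u t) + M t (u' t)) + R (u' t) (M t (u t))" for t
  have gd: "(g has_vector_derivative g' t) (at t within {0..})" if t: "t \<ge> 0" for t
  proof -
    have "((\<lambda>s. M s (u s)) has_vector_derivative (dM t (u t) + M t (u' t))) (at t within {0..})"
      by (rule deriv_apply[where K=K]) (use t M_bounded K M_deriv u_deriv in auto)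
    thus ?thesis unfolding g_def g'_def
      using bounded_bilinear.has_vector_derivative[OF bb u_deriv[rule_format, OF t]] by blast
  qed
  define F where "F t = (\<Sum>j<n. (norm (C j t (u t)))\<^sup>2) + U * norm (M t (r t)) + U * norm (Mstar t (r t))" for t
  define h where "h t = g' t + F t" for t
  have pw: "(norm (B t (u t)))\<^sup>2 \<le> h t" if t: "t \<ge> 0" for t
  proof -
    define v where "v = u t"
    define w where "w = Hop v"
    define z where "z = cinner w (M t v)"
    have Mt: "bounded_clinear (M t)" using M_bounded t by simp
    have vD: "v \<in> D" using u_dom t v_def by simp
    have u'eq: "u' t = r t - \<i> *\<^sub>C w" unfolding r_def w_def v_def by simp
    have heis: "cinner v (DM t v) = cinner v (dM t v) + (cinner w (\<i> *\<^sub>C M t v) - cinner v (\<i> *\<^sub>C M t w))"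
      using DM_heis t vD unfolding w_def by blast
    have id: "g' t = R (r t) (M t v) + R v (M t (r t)) + R v (DM t v)"
      unfolding g'_def R_def u'eq v_def[symmetric]
      using arg_cong[OF heis, of Re]
      by (simp add: bclin_diff[OF Mt] bclin_scaleC[OF Mt] cinner_diff_left cinner_diff_right
          cinner_add_right cinner_scaleC_left cinner_scaleC_right z_def[symmetric] w_def[symmetric])
    have nv: "norm v \<le> U" using U t v_def by simp
    have a1: "R (r t) (M t v) \<ge> - (U * norm (Mstar t (r t)))"
    proof -
      have "R (r t) (M t v) = Re (cinner v (Mstar t (r t)))"
        unfolding R_def using M_adj t by (metis Re_cinner_sym)
      moreover have "\<bar>Re (cinner v (Mstar t (r t)))\<bar> \<le> U * norm (Mstar t (r t))"
        using Re_cinner_CS[of v "Mstar t (r t)"] nv mult_right_mono norm_ge_zero order_trans by blast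
      ultimately show ?thesis by linarith
    qed
    have a2: "R v (M t (r t)) \<ge> - (U * norm (M t (r t)))"
    proof -
      have "\<bar>R v (M t (r t))\<bar> \<le> U * norm (M t (r t))"
        unfolding R_def
        using Re_cinner_CS[of v "M t (r t)"] nv mult_right_mono norm_ge_zero order_trans by blast
      thus ?thesis by linarith
    qed
    have a3: "R v (DM t v) \<ge> (norm (B t v))\<^sup>2 - (\<Sum>j<n. (norm (C j t v))\<^sup>2)"
      unfolding R_def using DM_lower t by blast
    show ?thesis unfolding h_def F_def id v_def[symmetric] using a1 a2 a3 by linarith
  qed
  have Fnn: "F t \<ge> 0" for t
    unfolding F_def using U by (intro add_nonneg_nonneg sum_nonneg mult_nonneg_nonneg) auto
  have sub: "f integrable_on S" if "set_integrable lborel {0..} f" "S \<subseteq> {0..}" "S \<in> sets lborel"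
    for f :: "real \<Rightarrow> real" and S
    using set_borel_integral_eq_integral(1)[OF set_integrable_subset[OF that(1) that(3) that(2)]] .
  have Fint: "F integrable_on S" if S: "S \<subseteq> {0..}" "S \<in> sets lborel" for S
  proof -
    have "(\<lambda>t. \<Sum>j<n. (norm (C j t (u t)))\<^sup>2) integrable_on S"
      by (rule Henstock_Kurzweil_Integration.integrable_sum) (use C_L2 sub S in auto)
    moreover have "(\<lambda>t. U *\<^sub>R norm (M t (r t))) integrable_on S"
      by (rule integrable_cmul) (use Mr_L1 sub S in auto)
    moreover have "(\<lambda>t. U *\<^sub>R norm (Mstar t (r t))) integrable_on S"
      by (rule integrable_cmul) (use Mstar_r_L1 sub S in auto)
    ultimately show ?thesis unfolding F_def
      by (auto intro!: Henstock_Kurzweil_Integration.integrable_add)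
  qed
  have gb: "\<bar>g t\<bar> \<le> U * (\<bar>K\<bar> * U)" if "t \<ge> 0" for t
  proof -
    have "\<bar>g t\<bar> \<le> norm (u t) * norm (M t (u t))"
      unfolding g_def R_def by (rule Re_cinner_CS)
    also have "\<dots> \<le> U * (\<bar>K\<bar> * U)"
    proof (rule mult_mono)
      show "norm (u t) \<le> U" using U that by simp
      have "norm (M t (u t)) \<le> K * norm (u t)" using K that by simp
      also have "\<dots> \<le> \<bar>K\<bar> * norm (u t)" by (simp add: mult_right_mono)
      also have "\<dots> \<le> \<bar>K\<bar> * U" using U that by (simp add: mult_left_mono)
      finally show "norm (M t (u t)) \<le> \<bar>K\<bar> * U" .
    qed (use U in auto)
    finally show ?thesis .
  qed
  define Bnd where "Bnd = 2 * (U * (\<bar>K\<bar> * U)) + integral {0..} F"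
  have hk: "(h has_integral (g k - g 0 + integral {0..k} F)) {0..k}" if k: "k \<ge> 0" for k :: real
  proof -
    have "(g' has_integral (g k - g 0)) {0..k}"
      by (rule fundamental_theorem_of_calculus[OF k])
        (auto intro: has_vector_derivative_within_subset[OF gd])
    moreover have "(F has_integral integral {0..k} F) {0..k}"
      using Fint[of "{0..k}"] by auto
    ultimately show ?thesis unfolding h_def by (rule has_integral_add)
  qed
  have hkb: "g k - g 0 + integral {0..k} F \<le> Bnd" if k: "k \<ge> 0" for k :: real
  proof -
    have "integral {0..k} F \<le> integral {0..} F"
      by (rule integral_subset_le) (use Fint Fnn in auto)
    moreover have "g k - g 0 \<le> 2 * (U * (\<bar>K\<bar> * U))" using gb[of k] gb[of 0] k by linarith
    ultimately show ?thesis unfolding Bnd_def by linarith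
  qed
  have hnn: "h t \<ge> 0" if "t \<ge> 0" for t
    using pw[OF that] by (meson order_trans zero_le_power2)
  define fk where "fk k t = (if t \<in> {0..real k} then h t else 0)" for k :: nat and t
  have fki: "(fk k has_integral (g (real k) - g 0 + integral {0..real k} F)) {0..}" for k
    unfolding fk_def by (subst has_integral_restrict) (use hk in auto)
  have mc: "h integrable_on {0..} \<and> ((\<lambda>k. integral {0..} (fk k)) \<longlongrightarrow> integral {0..} h) sequentially"
  proof (rule monotone_convergence_increasing)
    show "fk k integrable_on {0..}" for k using fki by blast
    show "fk k x \<le> fk (Suc k) x" if "x \<in> {0..}" for k x
      using that hnn[of x] unfolding fk_def by auto
    show "((\<lambda>k. fk k x) \<longlongrightarrow> h x) sequentially" if "x \<in> {0..}" for x
    proof (rule tendsto_eventually)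
      obtain N where "x \<le> real N" using real_arch_simple by blast
      hence "\<forall>k\<ge>N. fk k x = h x" using that unfolding fk_def
        by (auto intro: order_trans[of x "real N"])
      thus "\<forall>\<^sub>F k in sequentially. fk k x = h x" by (auto simp: eventually_sequentially)
    qed
    show "bounded (range (\<lambda>k. integral {0..} (fk k)))"
      unfolding bounded_iff
    proof (intro exI ballI)
      fix y assume "y \<in> range (\<lambda>k. integral {0..} (fk k))"
      then obtain k where y: "y = integral {0..} (fk k)" by blast
      have e: "y = g (real k) - g 0 + integral {0..real k} F" using y fki integral_unique by blast
      have "0 \<le> y" unfolding y
        by (rule has_integral_nonneg[OF integrable_integral]) (use fki hnn in \<open>auto simp: fk_def\<close>)
      thus "norm y \<le> Bnd" using hkb[of "real k"] e by simp
    qed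
  qed
  have hI: "(h has_integral integral {0..} h) {0..}" using mc by blast
  have nn: "(\<integral>\<^sup>+ t. ennreal (indicator {0..} t * h t) \<partial>lborel) = ennreal (integral {0..} h)"
    using nn_integral_has_integral_lebesgue[OF _ hI] hnn by auto
  have "(\<integral>\<^sup>+ t\<in>{0..}. ennreal ((norm (B t (u t)))\<^sup>2) \<partial>lborel)
      \<le> (\<integral>\<^sup>+ t. ennreal (indicator {0..} t * h t) \<partial>lborel)"
    by (rule nn_integral_mono) (auto simp: indicator_def intro: ennreal_leI pw)
  also have "\<dots> < \<infinity>" unfolding nn by simp
  finally show ?thesis .
qed

end
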